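(* In the setting described in the context: (i) Type A blowup occurs if and only if either ($0<v_0<1$ and $\omega_0>-\frac{\nu}{2}f_0(v_0)$) or ($v_0>1$ and $\omega_0<-\frac{\nu}{2}f_0(v_0)$). (ii) Type B blowup occurs if and only if either ($0<v_0<1$ and $\omega_0<-\frac{\nu}{2}f_\infty(v_0)$) or ($v_0>1$ and $\omega_0>-\frac{\nu}{2}f_\infty(v_0)$). (iii) In either blowup type, $\|\omega(\cdot,t)\|_{L^2}\to\infty$ and $\|\omega(\cdot,t)\|_{B_0}\to\infty$ as $t\to t_c^-$. (iv) If either ($0<v_0<1$ and $-\frac{\nu}{2}f_\infty(v_0)\le\omega_0\le-\frac{\nu}{2}f_0(v_0)$) or ($v_0>1$ and $-\frac{\nu}{2}f_0(v_0)\le\omega_0\le-\frac{\nu}{2}f_\infty(v_0)$), then neither type of blowup occurs and $v_c(t)\in(0,\infty)$ for all $t>0$, so the solution exists globally.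
   Context: Fix $\nu>0$, $v_0>0$ with $v_0\neq1$, and $\omega_0\in\mathbb{R}$. Consider the real ODE system $\frac{d\omega_{-2,i}}{dt}=\omega_{-2,i}^2\frac{1-2v_c^2+5v_c^4}{4v_c^2(1-v_c^2)^2}-\nu\omega_{-2,i}$, $\frac{dv_c}{dt}=-\omega_{-2,i}\frac{1+v_c^2}{4v_c(1-v_c^2)}$ with $v_c(0)=v_0$, $\omega_{-2,i}(0)=\omega_0$; its solution (continued through $v_c=1$) is characterized as follows. Let $F(v)=\frac{v(v^2-1)}{(v^2+1)^2}+\arctan v$, which is a strictly increasing bijection from $(0,\infty)$ onto $(0,\pi/2)$, and let $G(t)=F(v_0)+\frac{2\omega_0 v_0(1-e^{-\nu t})}{\nu(v_0^2-1)(v_0^2+1)^2}$. Then $v_c(t)$ is defined by $F(v_c(t))=G(t)$ for as long as $G(t)\in(0,\pi/2)$, and $\omega_{-2,i}(t)=\omega_0e^{-\nu t}\frac{v_0}{v_c(t)}\frac{v_c(t)^2-1}{v_0^2-1}\left(\frac{v_c(t)^2+1}{v_0^2+1}\right)^2$. Type A blowup means: there is a finite $t_c>0$ with $v_c(t)>0$ on $[0,t_c)$ and $v_c(t)\to0^+$ as $t\to t_c^-$. Type B blowup means: there is a finite $t_c>0$ with $v_c(t)\in(0,\infty)$ on $[0,t_c)$ and $v_c(t)\to+\infty$ as $t\to t_c^-$. Here $f_0(x)=(x^2-1)^2+\frac{(x^2+1)^2}{x}(x^2-1)\arctan(x)$ and $f_\infty(x)=(x^2-1)^2+\frac{(x^2+1)^2}{x}(x^2-1)\left(\arctan(x)-\frac{\pi}{2}\right)$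 for $x>0$. The associated $2\pi$-periodic real function is $\omega(x,t)=\omega_-(x,t)+\overline{\omega_-(\bar x,t)}$, where, with $X=\tan(x/2)$, $\omega_{-2}=\mathrm{i}\omega_{-2,i}$ and $\omega_{-1}=\frac{2\mathrm{i}v_c}{1-v_c^2}\omega_{-2}$, $\omega_-(x,t)=\omega_{-1}\left[\frac{1}{X-\mathrm{i}v_c}-\frac{1}{-\mathrm{i}-\mathrm{i}v_c}\right]+\omega_{-2}\left[\frac{1}{(X-\mathrm{i}v_c)^2}-\frac{1}{(-\mathrm{i}-\mathrm{i}v_c)^2}\right]$. Norms: $\|f\|_{L^2}^2=\int_{-\pi}^{\pi}|f|^2dx$ and $\|f\|_{B_0}=\sum_{k\in\mathbb{Z}}|\hat f_k|$ with $\hat f_k=\frac{1}{2\pi}\int_{-\pi}^{\pi}f(x)e^{-\mathrm{i}kx}dx$. *)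

theory Defs
  imports "HOL-Analysis.Analysis"
begin

definition Fv :: "real \<Rightarrow> real" where
  "Fv v = v * (v^2 - 1) / (v^2 + 1)^2 + arctan v"

definition Gt :: "real \<Rightarrow> real \<Rightarrow> real \<Rightarrow> real \<Rightarrow> real" where
  "Gt \<nu> v0 w0 t = Fv v0 + 2 * w0 * v0 * (1 - exp (- \<nu> * t)) / (\<nu> * (v0^2 - 1) * (v0^2 + 1)^2)"

definition sol_defined :: "real \<Rightarrow> real \<Rightarrow> real \<Rightarrow> real \<Rightarrow> bool" where
  "sol_defined \<nu> v0 w0 t \<longleftrightarrow> 0 < Gt \<nu> v0 w0 t \<and> Gt \<nu> v0 w0 t < pi / 2"

definition vc :: "real \<Rightarrow> real \<Rightarrow> real \<Rightarrow> real \<Rightarrow> real" where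
  "vc \<nu> v0 w0 t = (THE v. 0 < v \<and> Fv v = Gt \<nu> v0 w0 t)"

definition w2i :: "real \<Rightarrow> real \<Rightarrow> real \<Rightarrow> real \<Rightarrow> real" where
  "w2i \<nu> v0 w0 t = (let v = vc \<nu> v0 w0 t in
     w0 * exp (- \<nu> * t) * (v0 / v) * ((v^2 - 1) / (v0^2 - 1)) * ((v^2 + 1) / (v0^2 + 1))^2)"

definition w2 :: "real \<Rightarrow> real \<Rightarrow> real \<Rightarrow> real \<Rightarrow> complex" where
  "w2 \<nu> v0 w0 t = \<i> * complex_of_real (w2i \<nu> v0 w0 t)"

definition w1 :: "real \<Rightarrow> real \<Rightarrow> real \<Rightarrow> real \<Rightarrow> complex" where
  "w1 \<nu> v0 w0 t = (let v = complex_of_real (vc \<nu> v0 w0 t) in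
     (2 * \<i> * v / (1 - v^2)) * w2 \<nu> v0 w0 t)"

definition omega_minus :: "real \<Rightarrow> real \<Rightarrow> real \<Rightarrow> real \<Rightarrow> real \<Rightarrow> complex" where
  "omega_minus \<nu> v0 w0 x t = (let X = complex_of_real (tan (x / 2));
      v = complex_of_real (vc \<nu> v0 w0 t) in
     w1 \<nu> v0 w0 t * (1 / (X - \<i> * v) - 1 / (- \<i> - \<i> * v))
   + w2 \<nu> v0 w0 t * (1 / (X - \<i> * v)^2 - 1 / (- \<i> - \<i> * v)^2))"

text \<open>omega(x,t) = omega_-(x,t) + conj(omega_-(conj x,t)); for real x, conj x = x.\<close>
definition omega :: "real \<Rightarrow> real \<Rightarrow> real \<Rightarrow> real \<Rightarrow> real \<Rightarrow> complex" where
  "omega \<nu> v0 w0 x t = omega_minus \<nu> v0 w0 x t + cnj (omega_minus \<nu> v0 w0 x t)"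

definition L2_norm :: "(real \<Rightarrow> complex) \<Rightarrow> real" where
  "L2_norm f = sqrt (integral {-pi..pi} (\<lambda>x. (cmod (f x))^2))"

definition fourier_coeff :: "(real \<Rightarrow> complex) \<Rightarrow> int \<Rightarrow> complex" where
  "fourier_coeff f k = (1 / (2 * pi)) * integral {-pi..pi} (\<lambda>x. f x * exp (- \<i> * of_int k * of_real x))"

text \<open>Wiener algebra norm, valued in [0, infinity] so that divergence is representable.\<close>
definition B0_norm :: "(real \<Rightarrow> complex) \<Rightarrow> ennreal" where
  "B0_norm f = (\<Sum>\<^sub>\<infinity> k \<in> (UNIV :: int set). ennreal (cmod (fourier_coeff f k)))"

definition typeA_at :: "real \<Rightarrow> real \<Rightarrow> real \<Rightarrow> real \<Rightarrow> bool" where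
  "typeA_at \<nu> v0 w0 tc \<longleftrightarrow> 0 < tc \<and>
     (\<forall>t \<in> {0..<tc}. sol_defined \<nu> v0 w0 t \<and> 0 < vc \<nu> v0 w0 t) \<and>
     filterlim (vc \<nu> v0 w0) (at_right 0) (at_left tc)"

definition typeB_at :: "real \<Rightarrow> real \<Rightarrow> real \<Rightarrow> real \<Rightarrow> bool" where
  "typeB_at \<nu> v0 w0 tc \<longleftrightarrow> 0 < tc \<and>
     (\<forall>t \<in> {0..<tc}. sol_defined \<nu> v0 w0 t \<and> 0 < vc \<nu> v0 w0 t) \<and>
     filterlim (vc \<nu> v0 w0) at_top (at_left tc)"

definition typeA :: "real \<Rightarrow> real \<Rightarrow> real \<Rightarrow> bool" where
  "typeA \<nu> v0 w0 \<longleftrightarrow> (\<exists>tc. typeA_at \<nu> v0 w0 tc)"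

definition typeB :: "real \<Rightarrow> real \<Rightarrow> real \<Rightarrow> bool" where
  "typeB \<nu> v0 w0 \<longleftrightarrow> (\<exists>tc. typeB_at \<nu> v0 w0 tc)"

definition f0 :: "real \<Rightarrow> real" where
  "f0 x = (x^2 - 1)^2 + (x^2 + 1)^2 / x * (x^2 - 1) * arctan x"

definition finf :: "real \<Rightarrow> real" where
  "finf x = (x^2 - 1)^2 + (x^2 + 1)^2 / x * (x^2 - 1) * (arctan x - pi / 2)"

end

theory Submission
  imports Defs "HOL-Complex_Analysis.Complex_Analysis" "HOL-Real_Asymp.Real_Asymp"
begin


lemma circ_to_x:
  assumes "(f has_contour_integral I) (circlepath 0 1)"
  shows "((\<lambda>x. f (cis (pi - x)) * \<i> * cis (pi - x)) has_integral I) {-pi..pi}"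
proof -
  have "((\<lambda>t. f (0 + of_real 1 * cis t) * of_real 1 * \<i> * cis t) has_integral I) {0..2*pi}"
    using assms unfolding circlepath_def
    by (subst has_contour_integral_part_circlepath_iff[symmetric]) auto
  hence h: "((\<lambda>t. f (cis t) * \<i> * cis t) has_integral I) (cbox 0 (2*pi))" by simp
  have "((\<lambda>x. (\<lambda>t. f (cis t) * \<i> * cis t) ((-1) *\<^sub>R x + pi)) has_integral (1 / (\<bar>-1\<bar> ^ DIM(real))) *\<^sub>R I)
     ((\<lambda>x. (1 / (-1)) *\<^sub>R x + -((1 / (-1)) *\<^sub>R pi)) ` cbox 0 (2*pi))"
    by (rule has_integral_affinity[OF h]) simp
  moreover have "((\<lambda>x. (1 / (-1)) *\<^sub>R x + -((1 / (-1)) *\<^sub>R pi)) ` cbox 0 (2*pi)) = {-pi..pi}"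
  proof -
    have "((\<lambda>x. (1 / (-1)) *\<^sub>R x + -((1 / (-1)) *\<^sub>R pi)) ` cbox 0 (2*pi)) = (\<lambda>x. (-1) * x + pi) ` {0..2*pi}"
      by auto
    also have "\<dots> = {-pi..pi}" by (subst image_affinity_atLeastAtMost) auto
    finally show ?thesis .
  qed
  ultimately show ?thesis by (simp add: algebra_simps)
qed



definition Dd :: "real \<Rightarrow> complex \<Rightarrow> complex" where
  "Dd v u = of_real (1+v) + of_real (1-v) * u"

definition Hh :: "real \<Rightarrow> complex \<Rightarrow> complex \<Rightarrow> complex \<Rightarrow> complex" where
  "Hh v c1 c2 u = -2*\<i>*c1 / (of_real (1+v) * Dd v u) + 4*c2*(of_real (1+v) - of_real v * u) / ((of_real (1+v))^2 * (Dd v u)^2)"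

lemma Dd_nz:
  assumes "v > 0" "norm u < 2*(1+v)/(\<bar>1-v\<bar>+1+v)"
  shows "Dd v u \<noteq> 0"
proof
  assume "Dd v u = 0"
  hence "of_real (1+v) = - (of_real (1-v) * u)" unfolding Dd_def by (simp add: add_eq_0_iff)
  hence "norm (of_real (1+v) :: complex) = norm (of_real (1-v) * u)" by simp
  hence "\<bar>1+v\<bar> = \<bar>1-v\<bar> * norm u" by (simp only: norm_mult norm_of_real)
  hence e: "1 + v = \<bar>1-v\<bar> * norm u" using assms by simp
  have "\<bar>1-v\<bar> * norm u \<le> \<bar>1-v\<bar> * (2*(1+v)/(\<bar>1-v\<bar>+1+v))"
    using assms by (intro mult_left_mono) auto
  also have "\<dots> < 1 + v"
  proof -
    have a: "\<bar>1-v\<bar> < 1+v" using assms by (auto simp: abs_if)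
    have "(1+v) * (\<bar>1-v\<bar>+1+v) - \<bar>1-v\<bar> * (2*(1+v)) = (1+v)*((1+v) - \<bar>1-v\<bar>)" by (simp add: algebra_simps)
    also have "\<dots> > 0" using a assms by simp
    finally have "\<bar>1-v\<bar> * (2*(1+v)) < (1+v) * (\<bar>1-v\<bar>+1+v)" by simp
    thus ?thesis using assms by (simp add: field_simps)
  qed
  finally show False using e by simp
qed

lemma R_gt1: assumes "(v::real) > 0" shows "1 < 2*(1+v)/(\<bar>1-v\<bar>+1+v)"
proof -
  have "\<bar>1-v\<bar> < 1 + v" using assms by (auto simp: abs_if)
  hence "\<bar>1-v\<bar>+1+v < 2*(1+v)" by simp
  moreover have "0 < \<bar>1-v\<bar>+1+v" using assms by simp
  ultimately show ?thesis by (simp add: divide_simps)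
qed

lemma Hh_holo:
  assumes "v > 0"
  shows "Hh v c1 c2 holomorphic_on ball 0 (2*(1+v)/(\<bar>1-v\<bar>+1+v))"
  "continuous_on (cball 0 1) (Hh v c1 c2)"
proof -
  have nz: "Dd v u \<noteq> 0" if "u \<in> ball 0 (2*(1+v)/(\<bar>1-v\<bar>+1+v))" for u
    using that assms by (intro Dd_nz) auto
  show "Hh v c1 c2 holomorphic_on ball 0 (2*(1+v)/(\<bar>1-v\<bar>+1+v))"
    unfolding Hh_def Dd_def using nz assms unfolding Dd_def
    by (intro holomorphic_intros) (auto simp: add_pos_pos)
  have sub: "cball 0 1 \<subseteq> ball (0::complex) (2*(1+v)/(\<bar>1-v\<bar>+1+v))"
    using R_gt1[OF assms] by (intro cball_subset_ball_iff[THEN iffD2]) simp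
  show "continuous_on (cball 0 1) (Hh v c1 c2)"
    by (rule continuous_on_subset[OF holomorphic_on_imp_continuous_on[OF \<open>Hh v c1 c2 holomorphic_on _\<close>] sub])
qed

lemma H_int1:
  assumes "v > 0"
  shows "((\<lambda>x. Hh v c1 c2 (cis (pi - x))) has_integral (2 * pi * Hh v c1 c2 0)) {-pi..pi}"
proof -
  have "((\<lambda>u. Hh v c1 c2 u / (u - 0)) has_contour_integral (2 * of_real pi * \<i> * Hh v c1 c2 0)) (circlepath 0 1)"
    by (rule Cauchy_integral_circlepath[OF Hh_holo(2)[OF assms] holomorphic_on_subset[OF Hh_holo(1)[OF assms] subset_ball[OF less_imp_le[OF R_gt1[OF assms]]]]])
       simp
  from circ_to_x[OF this]
  have "((\<lambda>x. Hh v c1 c2 (cis (pi - x)) / (cis (pi - x) - 0) * \<i> * cis (pi - x)) has_integral (2 * of_real pi * \<i> * Hh v c1 c2 0)) {-pi..pi}" .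
  hence "((\<lambda>x. \<i> * Hh v c1 c2 (cis (pi - x))) has_integral (2 * of_real pi * \<i> * Hh v c1 c2 0)) {-pi..pi}"
    by (rule has_integral_eq[rotated]) (simp add: field_simps)
  from has_integral_mult_right[OF this, of "-\<i>"]
  show ?thesis by (simp add: algebra_simps)
qed

lemma H_int2:
  assumes "v > 0"
  shows "((\<lambda>x. cis (pi - x) * cis (pi - x) * Hh v c1 c2 (cis (pi - x))) has_integral 0) {-pi..pi}"
proof -
  have ho: "(\<lambda>u. u * u * Hh v c1 c2 u) holomorphic_on ball 0 (2*(1+v)/(\<bar>1-v\<bar>+1+v))"
    using Hh_holo(1)[OF assms] by (intro holomorphic_intros)
  have sub: "cball 0 1 \<subseteq> ball (0::complex) (2*(1+v)/(\<bar>1-v\<bar>+1+v))"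
    using R_gt1[OF assms] by (intro cball_subset_ball_iff[THEN iffD2]) simp
  have "((\<lambda>u. (u * u * Hh v c1 c2 u) / (u - 0)) has_contour_integral (2 * of_real pi * \<i> * (0 * 0 * Hh v c1 c2 0))) (circlepath 0 1)"
    by (rule Cauchy_integral_circlepath[OF continuous_on_subset[OF holomorphic_on_imp_continuous_on[OF ho] sub] holomorphic_on_subset[OF ho subset_ball[OF less_imp_le[OF R_gt1[OF assms]]]]])
       simp
  from circ_to_x[OF this[simplified mult_zero_left mult_zero_right]]
  have "((\<lambda>x. \<i> * (cis (pi - x) * cis (pi - x) * Hh v c1 c2 (cis (pi - x)))) has_integral 0) {-pi..pi}"
    by (rule has_integral_eq[rotated]) (simp add: field_simps)
  from has_integral_mult_right[OF this, of "-\<i>"]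
  show ?thesis by (simp add: algebra_simps)
qed

lemma tan_facts:
  assumes "-pi < x" "x < pi"
  shows "tan (x/2) * sin x = 1 - cos x" "tan (x/2) * (1 + cos x) = sin x" "cos (x/2) > 0"
proof -
  have c: "cos (x/2) > 0" using assms by (intro cos_gt_zero_pi) auto
  have s: "sin x = 2 * sin (x/2) * cos (x/2)" using sin_double[of "x/2"] by simp
  have co: "cos x = 1 - 2 * sin (x/2)^2" using cos_double_sin[of "x/2"] by simp
  have co2: "cos x = 2 * cos (x/2)^2 - 1" using cos_double_cos[of "x/2"] by simp
  show "tan (x/2) * sin x = 1 - cos x" using c unfolding tan_def s co by (simp add: field_simps power2_eq_square)
  show "tan (x/2) * (1 + cos x) = sin x" using c unfolding tan_def s co2 by (simp add: field_simps power2_eq_square)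
  show "cos (x/2) > 0" by (rule c)
qed

lemma tan_ident:
  assumes "-pi < x" "x < pi" "v > 0"
  shows "1 / (complex_of_real (tan (x/2)) - \<i> * complex_of_real v) = \<i> * (1 - cis (pi - x)) / Dd v (cis (pi - x))"
proof -
  have nz1: "complex_of_real (tan (x/2)) - \<i> * complex_of_real v \<noteq> 0"
    using assms by (auto simp: complex_eq_iff)
  have nz2: "Dd v (cis (pi - x)) \<noteq> 0"
    using assms R_gt1[OF assms(3)] by (intro Dd_nz) auto
  have "(complex_of_real (tan (x/2)) - \<i> * complex_of_real v) * (\<i> * (1 - cis (pi - x))) = Dd v (cis (pi - x))"
    using tan_facts[OF assms(1,2)]
    by (simp add: complex_eq_iff Dd_def cis.ctr algebra_simps)
  thus ?thesis using nz1 nz2 by (simp add: field_simps)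
qed

lemma alg1:
  fixes p vv w D c1 c2 :: complex
  assumes "p = 1 + vv" "D = p + (1 - vv) * w" "D \<noteq> 0" "p \<noteq> 0"
  shows "\<i>*(1-w)/D - \<i>/p = -2*\<i>*w/(p*D)"
    "(\<i>*(1-w)/D)^2 - (\<i>/p)^2 = 4*w*(p - vv*w)/(p^2*D^2)"
proof -
  have "\<i>*(1-w)/D - \<i>/p = \<i>*((1-w)*p - D)/(p*D)"
    using assms(3,4) by (simp add: field_simps)
  also have "(1-w)*p - D = -2*w" using assms(1,2) by (simp add: algebra_simps)
  finally show "\<i>*(1-w)/D - \<i>/p = -2*\<i>*w/(p*D)" by simp
  have "(\<i>*(1-w)/D)^2 - (\<i>/p)^2 = (D^2 - p^2*(1-w)^2)/(p^2*D^2)"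
    using assms(3,4) by (simp add: field_simps power2_eq_square)
  also have "D^2 - p^2*(1-w)^2 = 4*w*(p - vv*w)"
    by (simp only: assms(1,2)) (simp add: algebra_simps power2_eq_square)
  finally show "(\<i>*(1-w)/D)^2 - (\<i>/p)^2 = 4*w*(p - vv*w)/(p^2*D^2)" .
qed

lemma om_ident:
  assumes "-pi < x" "x < pi" "v > 0"
  shows "c1 * (1 / (complex_of_real (tan (x/2)) - \<i> * complex_of_real v) - 1 / (- \<i> - \<i> * complex_of_real v))
    + c2 * (1 / (complex_of_real (tan (x/2)) - \<i> * complex_of_real v)^2 - 1 / (- \<i> - \<i> * complex_of_real v)^2)
    = cis (pi - x) * Hh v c1 c2 (cis (pi - x))"
proof -
  have nz2: "Dd v (cis (pi - x)) \<noteq> 0"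
    using assms R_gt1[OF assms(3)] by (intro Dd_nz) auto
  have nzv: "complex_of_real (1 + v) \<noteq> 0" using assms by (simp add: complex_eq_iff)
  have e: "- \<i> - \<i> * complex_of_real v = -\<i> * complex_of_real (1+v)" by (simp add: algebra_simps)
  have B: "1 / (- \<i> - \<i> * complex_of_real v) = \<i> / complex_of_real (1 + v)"
    unfolding e using nzv by (simp add: divide_inverse inverse_mult_distrib)
  define w where "w = cis (pi - x)"
  have D: "Dd v w = complex_of_real (1+v) + complex_of_real (1-v) * w" unfolding Dd_def ..
  have p: "complex_of_real (1+v) = 1 + complex_of_real v" by simp
  have q: "complex_of_real (1-v) = 1 - complex_of_real v" by simp
  note a = alg1[OF p D[unfolded q] nz2[folded w_def] nzv]
  show ?thesis
    unfolding power_one_over[symmetric] tan_ident[OF assms] B w_def[symmetric] a Hh_def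
    using nz2[folded w_def] nzv
    by (simp add: field_simps)
qed



definition omg :: "complex \<Rightarrow> complex \<Rightarrow> real \<Rightarrow> real \<Rightarrow> complex" where
  "omg c1 c2 v x = (let X = complex_of_real (tan (x/2)); V = complex_of_real v;
      m = c1 * (1 / (X - \<i> * V) - 1 / (- \<i> - \<i> * V)) + c2 * (1 / (X - \<i> * V)^2 - 1 / (- \<i> - \<i> * V)^2)
    in m + cnj m)"

definition psi :: "complex \<Rightarrow> complex \<Rightarrow> real \<Rightarrow> real \<Rightarrow> complex" where
  "psi c1 c2 v x = cis (pi - x) * Hh v c1 c2 (cis (pi - x)) + cnj (cis (pi - x) * Hh v c1 c2 (cis (pi - x)))"

lemma omg_psi: "v > 0 \<Longrightarrow> -pi < x \<Longrightarrow> x < pi \<Longrightarrow> omg c1 c2 v x = psi c1 c2 v x"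
  unfolding omg_def psi_def Let_def by (simp only: om_ident)

lemma psi_cont:
  assumes "v > 0"
  shows "continuous_on {-pi..pi} (psi c1 c2 v)"
proof -
  have h: "continuous_on {-pi..pi} (\<lambda>x. Hh v c1 c2 (cis (pi - x)))"
    by (rule continuous_on_compose2[OF Hh_holo(2)[OF assms]]) (auto intro!: continuous_intros)
  show ?thesis unfolding psi_def
    by (intro continuous_intros h)
qed

lemma exp_m1: "exp (- \<i> * of_int (-1) * of_real x) = cis x"
  by (simp add: cis_conv_exp)

lemma psi_fourier:
  assumes "v > 0"
  shows "((\<lambda>x. psi c1 c2 v x * exp (- \<i> * of_int (-1) * of_real x)) has_integral (-2 * pi * Hh v c1 c2 0)) {-pi..pi}"
proof -
  have i1: "((\<lambda>x. - Hh v c1 c2 (cis (pi - x))) has_integral (- (2 * pi * Hh v c1 c2 0))) {-pi..pi}"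
    using has_integral_neg[OF H_int1[OF assms]] .
  have i2': "((cnj \<circ> (\<lambda>x. cis (pi - x) * cis (pi - x) * Hh v c1 c2 (cis (pi - x)))) has_integral cnj 0) {-pi..pi}"
    unfolding has_integral_cnj by (rule H_int2[OF assms])
  have i2: "((\<lambda>x. - cnj (cis (pi - x) * cis (pi - x) * Hh v c1 c2 (cis (pi - x)))) has_integral 0) {-pi..pi}"
    using has_integral_neg[OF i2'] unfolding o_def by simp
  have "((\<lambda>x. - Hh v c1 c2 (cis (pi - x)) + - cnj (cis (pi - x) * cis (pi - x) * Hh v c1 c2 (cis (pi - x)))) has_integral (- (2 * pi * Hh v c1 c2 0) + 0)) {-pi..pi}"
    by (rule has_integral_add[OF i1 i2])
  hence "((\<lambda>x. - Hh v c1 c2 (cis (pi - x)) + - cnj (cis (pi - x) * cis (pi - x) * Hh v c1 c2 (cis (pi - x)))) has_integral (-2 * pi * Hh v c1 c2 0)) {-pi..pi}"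
    by simp
  thus ?thesis
  proof (rule has_integral_eq[rotated])
    fix x
    have a: "cis (pi - x) * cis x = -1" by (simp add: cis_mult)
    have b: "cnj (cis x) = cis (- x)" by (simp add: cis_cnj)
    have c: "cis (-x) = - cis (pi - x)" by (simp add: cis.ctr complex_eq_iff)
    define w where "w = cis (pi - x)"
    define H where "H = Hh v c1 c2 w"
    have a': "w * cis x = -1" using a unfolding w_def .
    have c': "cnj (cis x) = - w" using b c unfolding w_def by simp
    have "psi c1 c2 v x * exp (- \<i> * of_int (-1) * of_real x) = (w * H + cnj (w * H)) * cis x"
      unfolding exp_m1 psi_def w_def H_def ..
    also have "\<dots> = H * (w * cis x) + cnj (w * H * cnj (cis x))" by (simp add: algebra_simps)
    also have "\<dots> = - H + - cnj (w * w * H)" unfolding a' c' by (simp add: algebra_simps)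
    finally show "- Hh v c1 c2 (cis (pi - x)) + - cnj (cis (pi - x) * cis (pi - x) * Hh v c1 c2 (cis (pi - x))) = psi c1 c2 v x * exp (- \<i> * of_int (-1) * of_real x)"
      unfolding w_def H_def by simp
  qed
qed



lemma spike_pm_pi:
  assumes "\<And>x. -pi < x \<Longrightarrow> x < pi \<Longrightarrow> f x = g x" "(g has_integral I) {-pi..pi}"
  shows "(f has_integral I) {-pi..pi}"
  by (rule has_integral_spike_finite[of "{-pi,pi}" _ _ g]) (use assms in auto)

lemma L2_lower:
  fixes f \<psi> :: "real \<Rightarrow> complex"
  assumes cont: "continuous_on {-pi..pi} \<psi>" and eq: "\<And>x. -pi < x \<Longrightarrow> x < pi \<Longrightarrow> f x = \<psi> x"
    and hi: "((\<lambda>x. \<psi> x * exp (- \<i> * of_int (-1) * of_real x)) has_integral J) {-pi..pi}"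
  shows "norm J / sqrt (2*pi) \<le> L2_norm f" "fourier_coeff f (-1) = J / (2*pi)"
proof -
  have hf: "((\<lambda>x. f x * exp (- \<i> * of_int (-1) * of_real x)) has_integral J) {-pi..pi}"
    by (rule spike_pm_pi[OF _ hi]) (simp add: eq)
  show "fourier_coeff f (-1) = J / (2*pi)"
    unfolding fourier_coeff_def using integral_unique[OF hf] by simp
  define M where "M = norm J"
  have c1: "continuous_on {-pi..pi} (\<lambda>x. cmod (\<psi> x))" by (intro continuous_intros cont)
  have c2: "continuous_on {-pi..pi} (\<lambda>x. (cmod (\<psi> x))^2)" by (intro continuous_intros cont)
  have int1: "(\<lambda>x. cmod (\<psi> x)) integrable_on {-pi..pi}" by (rule integrable_continuous_interval[OF c1])
  have int2: "(\<lambda>x. (cmod (\<psi> x))^2) integrable_on {-pi..pi}" by (rule integrable_continuous_interval[OF c2])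
  have "norm (integral {-pi..pi} (\<lambda>x. \<psi> x * exp (- \<i> * of_int (-1) * of_real x))) \<le> integral {-pi..pi} (\<lambda>x. cmod (\<psi> x))"
    by (rule Henstock_Kurzweil_Integration.integral_norm_bound_integral[OF has_integral_integrable[OF hi] int1])
       (simp add: exp_m1 norm_mult)
  hence MI: "M \<le> integral {-pi..pi} (\<lambda>x. cmod (\<psi> x))" unfolding M_def using integral_unique[OF hi] by simp
  define a where "a = M / (2*pi)"
  have a0: "a \<ge> 0" unfolding a_def M_def by simp
  have "integral {-pi..pi} (\<lambda>x. 2 * a * cmod (\<psi> x) - a^2) \<le> integral {-pi..pi} (\<lambda>x. (cmod (\<psi> x))^2)"
  proof (rule integral_le)
    show "(\<lambda>x. 2 * a * cmod (\<psi> x) - a^2) integrable_on {-pi..pi}"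
      using integrable_on_cmult_left[OF int1, of "2*a"] by (intro integrable_diff integrable_const_ivl) simp_all
    show "\<And>x. x \<in> {-pi..pi} \<Longrightarrow> 2 * a * cmod (\<psi> x) - a^2 \<le> (cmod (\<psi> x))^2"
    proof -
      fix x
      have "0 \<le> (cmod (\<psi> x) - a)^2" by simp
      thus "2 * a * cmod (\<psi> x) - a^2 \<le> (cmod (\<psi> x))^2" by (simp add: power2_eq_square algebra_simps)
    qed
  qed (rule int2)
  moreover have "integral {-pi..pi} (\<lambda>x. 2 * a * cmod (\<psi> x) - a^2) = 2 * a * integral {-pi..pi} (\<lambda>x. cmod (\<psi> x)) - a^2 * (2*pi)"
  proof -
    have i2a: "(\<lambda>x. 2 * a * cmod (\<psi> x)) integrable_on {-pi..pi}"
      using integrable_on_cmult_left[OF int1, of "2*a"] by simp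
    have "integral {-pi..pi} (\<lambda>x. 2 * a * cmod (\<psi> x) - a^2) = integral {-pi..pi} (\<lambda>x. 2 * a * cmod (\<psi> x)) - integral {-pi..pi} (\<lambda>x. a^2)"
      by (rule integral_diff[OF i2a integrable_const_ivl])
    also have "integral {-pi..pi} (\<lambda>x. 2 * a * cmod (\<psi> x)) = 2 * a * integral {-pi..pi} (\<lambda>x. cmod (\<psi> x))"
      by (rule integral_mult_right)
    also have "integral {-pi..pi} (\<lambda>x. a^2) = a^2 * (2*pi)" by simp
    finally show ?thesis .
  qed
  moreover have "2 * a * M \<le> 2 * a * integral {-pi..pi} (\<lambda>x. cmod (\<psi> x))"
    using MI a0 by (intro mult_left_mono) auto
  moreover have "2 * a * M - a^2 * (2*pi) = M^2 / (2*pi)"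
    unfolding a_def by (simp add: field_simps power2_eq_square)
  ultimately have low: "M^2 / (2*pi) \<le> integral {-pi..pi} (\<lambda>x. (cmod (\<psi> x))^2)" by linarith
  have "integral {-pi..pi} (\<lambda>x. (cmod (f x))^2) = integral {-pi..pi} (\<lambda>x. (cmod (\<psi> x))^2)"
    by (rule integral_unique[OF spike_pm_pi[OF _ integrable_integral[OF int2]]]) (simp add: eq)
  hence "L2_norm f = sqrt (integral {-pi..pi} (\<lambda>x. (cmod (\<psi> x))^2))" unfolding L2_norm_def by simp
  moreover have "sqrt (M^2 / (2*pi)) = M / sqrt (2*pi)"
    unfolding M_def by (simp add: real_sqrt_divide)
  ultimately show "norm J / sqrt (2*pi) \<le> L2_norm f"
    using low unfolding M_def by (metis real_sqrt_le_iff)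
qed

lemma B0_lower: "ennreal (norm (fourier_coeff f (-1))) \<le> B0_norm f"
proof -
  have s: "(\<lambda>k. ennreal (cmod (fourier_coeff f k))) summable_on A" for A
    by (rule nonneg_summable_on_complete) simp
  have "infsum (\<lambda>k. ennreal (cmod (fourier_coeff f k))) {-1} \<le> infsum (\<lambda>k. ennreal (cmod (fourier_coeff f k))) UNIV"
    by (rule infsum_mono_neutral[OF s s]) auto
  thus ?thesis unfolding B0_norm_def by simp
qed



lemma Fv_deriv: "(Fv has_real_derivative (8 * v^2 / (v^2 + 1)^3)) (at v)"
proof -
  have "0 < v^2 + (1::real)" by (simp add: add_nonneg_pos)
  hence nz: "v^2 + 1 \<noteq> (0::real)" by linarith
  have d1: "((\<lambda>v. v * (v^2 - 1)) has_real_derivative (3 * v^2 - 1)) (at v)"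
    by (auto intro!: derivative_eq_intros simp: power2_eq_square algebra_simps)
  have d2: "((\<lambda>v. (v^2 + 1)^2) has_real_derivative (4 * v * (v^2 + 1))) (at v)"
    by (auto intro!: derivative_eq_intros simp: power2_eq_square algebra_simps)
  have d3: "((\<lambda>v. v * (v^2 - 1) / (v^2 + 1)^2) has_real_derivative
     (((3 * v^2 - 1) * (v^2 + 1)^2 - v * (v^2 - 1) * (4 * v * (v^2 + 1))) / ((v^2 + 1)^2 * (v^2 + 1)^2))) (at v)"
    using DERIV_divide[OF d1 d2] nz by simp
  have d4: "(arctan has_real_derivative inverse (1 + v^2)) (at v)" by (rule DERIV_arctan)
  have "(Fv has_real_derivative
     (((3 * v^2 - 1) * (v^2 + 1)^2 - v * (v^2 - 1) * (4 * v * (v^2 + 1))) / ((v^2 + 1)^2 * (v^2 + 1)^2) + inverse (1 + v^2))) (at v)"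
    unfolding Fv_def[abs_def] by (rule DERIV_add[OF d3 d4])
  moreover have "((3 * v^2 - 1) * (v^2 + 1)^2 - v * (v^2 - 1) * (4 * v * (v^2 + 1))) / ((v^2 + 1)^2 * (v^2 + 1)^2) + inverse (1 + v^2)
     = 8 * v^2 / (v^2 + 1)^3"
  proof -
    have "((3 * v^2 - 1) * (v^2 + 1)^2 - v * (v^2 - 1) * (4 * v * (v^2 + 1))) = (v^2+1) * (6 * v^2 - v^4 - 1)"
      by (simp add: algebra_simps power2_eq_square power4_eq_xxxx)
    hence "((3 * v^2 - 1) * (v^2 + 1)^2 - v * (v^2 - 1) * (4 * v * (v^2 + 1))) / ((v^2 + 1)^2 * (v^2 + 1)^2)
       = (6 * v^2 - v^4 - 1) / (v^2 + 1)^3" using nz by (simp add: power2_eq_square power3_eq_cube)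
    moreover have "inverse (1 + v^2) = (v^2 + 1)^2 / (v^2 + 1)^3"
    proof -
      have e: "(v^2+1)^3 = (v^2+1)^2 * (v^2+1)" by (simp add: power3_eq_cube power2_eq_square)
      have "(v^2 + 1)^2 \<noteq> 0" using nz by simp
      thus ?thesis unfolding e using nz by (simp add: divide_inverse add.commute)
    qed
    ultimately have "((3 * v^2 - 1) * (v^2 + 1)^2 - v * (v^2 - 1) * (4 * v * (v^2 + 1))) / ((v^2 + 1)^2 * (v^2 + 1)^2) + inverse (1 + v^2)
       = ((6 * v^2 - v^4 - 1) + (v^2 + 1)^2) / (v^2 + 1)^3" by (simp add: add_divide_distrib)
    also have "(6 * v^2 - v^4 - 1) + (v^2 + 1)^2 = 8 * v^2" by (simp add: algebra_simps power2_eq_square power4_eq_xxxx)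
    finally show ?thesis .
  qed
  ultimately show ?thesis by simp
qed

lemma Fv_cont: "isCont Fv v"
  using Fv_deriv DERIV_isCont by blast

lemma Fv_cont_on: "continuous_on S Fv"
  using Fv_cont by (simp add: continuous_at_imp_continuous_on)

lemma Fv_0: "Fv 0 = 0" by (simp add: Fv_def)

lemma Fv_strict: assumes "0 \<le> a" "a < b" shows "Fv a < Fv b"
proof (rule DERIV_pos_imp_increasing_open[OF assms(2)])
  fix x assume "a < x" "x < b"
  hence "x > 0" using assms by simp
  thus "\<exists>y. (Fv has_real_derivative y) (at x) \<and> 0 < y"
    using Fv_deriv[of x] by (intro exI[of _ "8 * x^2 / (x^2 + 1)^3"]) (simp add: add_nonneg_pos)
qed (rule Fv_cont_on)

lemma Fv_mono_iff: assumes "0 \<le> a" "0 \<le> b" shows "Fv a < Fv b \<longleftrightarrow> a < b"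
  using Fv_strict[of a b] Fv_strict[of b a] assms by (cases a b rule: linorder_cases) auto

lemma Fv_inj: assumes "0 \<le> a" "0 \<le> b" "Fv a = Fv b" shows "a = b"
  using Fv_strict[of a b] Fv_strict[of b a] assms by (cases a b rule: linorder_cases) auto

lemma Fv_top: "(Fv \<longlongrightarrow> pi/2) at_top"
  unfolding Fv_def[abs_def] by real_asymp

lemma Fv_lt: assumes "0 \<le> v" shows "Fv v < pi/2"
proof -
  have "Fv (v+1) \<le> pi/2"
  proof (rule tendsto_lowerbound[OF Fv_top])
    show "\<forall>\<^sub>F x in at_top. Fv (v+1) \<le> Fv x"
      unfolding eventually_at_top_linorder
      using assms by (intro exI[of _ "v+1"]) (auto simp: le_less Fv_strict)
  qed simp
  moreover have "Fv v < Fv (v+1)" using assms by (intro Fv_strict) auto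
  ultimately show ?thesis by simp
qed

lemma Fv_pos: "0 < v \<Longrightarrow> 0 < Fv v"
  using Fv_strict[of 0 v] by (simp add: Fv_0)

lemma Fv_surj: assumes "0 < y" "y < pi/2" shows "\<exists>v>0. Fv v = y"
proof -
  have "\<forall>\<^sub>F x in at_top. y < Fv x" using order_tendstoD(1)[OF Fv_top assms(2)] .
  then obtain b where b: "\<And>x. x \<ge> b \<Longrightarrow> y < Fv x" unfolding eventually_at_top_linorder by blast
  define b' where "b' = max b 0"
  have "y < Fv b'" using b unfolding b'_def by simp
  then obtain x where x: "0 \<le> x" "x \<le> b'" "Fv x = y"
    using IVT[of Fv 0 y b'] assms Fv_cont unfolding b'_def by (auto simp: Fv_0)
  hence "x \<noteq> 0" using assms by (auto simp: Fv_0)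
  thus ?thesis using x by (intro exI[of _ x]) auto
qed

lemma the_vc:
  assumes "0 < y" "y < pi/2"
  shows "0 < (THE v. 0 < v \<and> Fv v = y) \<and> Fv (THE v. 0 < v \<and> Fv v = y) = y"
proof -
  obtain v where v: "0 < v" "Fv v = y" using Fv_surj[OF assms] by blast
  have "\<exists>!v. 0 < v \<and> Fv v = y"
    using v Fv_inj by (intro ex1I[of _ v]) auto
  from theI'[OF this] show ?thesis .
qed

lemma vc_prop:
  assumes "sol_defined \<nu> v0 w0 t"
  shows "0 < vc \<nu> v0 w0 t" "Fv (vc \<nu> v0 w0 t) = Gt \<nu> v0 w0 t"
  using the_vc[of "Gt \<nu> v0 w0 t"] assms unfolding sol_defined_def vc_def by auto

lemma vc_lt:
  assumes "sol_defined \<nu> v0 w0 t" "0 < e" "Gt \<nu> v0 w0 t < Fv e"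
  shows "vc \<nu> v0 w0 t < e"
  using vc_prop[OF assms(1)] assms(2,3) Fv_mono_iff[of "vc \<nu> v0 w0 t" e] by auto

lemma vc_gt:
  assumes "sol_defined \<nu> v0 w0 t" "0 < e" "Fv e < Gt \<nu> v0 w0 t"
  shows "e < vc \<nu> v0 w0 t"
  using vc_prop[OF assms(1)] assms(2,3) Fv_mono_iff[of e "vc \<nu> v0 w0 t"] by auto



definition cc :: "real \<Rightarrow> real \<Rightarrow> real \<Rightarrow> real" where
  "cc \<nu> v0 w0 = 2 * w0 * v0 / (\<nu> * (v0^2 - 1) * (v0^2 + 1)^2)"

lemma Gt_cc: "Gt \<nu> v0 w0 t = Fv v0 + cc \<nu> v0 w0 * (1 - exp (- \<nu> * t))"
  unfolding Gt_def cc_def by simp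

lemma Gt_isCont: "isCont (Gt \<nu> v0 w0) t"
proof -
  have "continuous_on UNIV (Gt \<nu> v0 w0)" unfolding Gt_cc[abs_def] by (intro continuous_intros)
  thus ?thesis by (simp add: continuous_on_eq_continuous_at)
qed

lemma Gt_left: "(Gt \<nu> v0 w0 \<longlongrightarrow> Gt \<nu> v0 w0 tc) (at_left tc)"
proof -
  have "(Gt \<nu> v0 w0 \<longlongrightarrow> Gt \<nu> v0 w0 tc) (at tc)" using Gt_isCont[where t=tc] unfolding isCont_def .
  moreover have "at_left tc \<le> at tc" by (rule at_le) simp
  ultimately show ?thesis by (rule tendsto_mono[rotated])
qed

lemma ev_left: "0 < tc \<Longrightarrow> \<forall>\<^sub>F t in at_left tc. 0 < t \<and> t < (tc::real)"
  using eventually_at_left_real[of 0 tc] by simp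

lemma typeA_G0:
  assumes "typeA_at \<nu> v0 w0 tc"
  shows "Gt \<nu> v0 w0 tc = 0"
proof -
  have tc: "0 < tc" and H: "\<And>t. t \<in> {0..<tc} \<Longrightarrow> sol_defined \<nu> v0 w0 t \<and> 0 < vc \<nu> v0 w0 t"
    and L: "filterlim (vc \<nu> v0 w0) (at_right 0) (at_left tc)" using assms unfolding typeA_at_def by auto
  have "(vc \<nu> v0 w0 \<longlongrightarrow> 0) (at_left tc)" using L by (simp add: filterlim_at)
  hence "((\<lambda>t. Fv (vc \<nu> v0 w0 t)) \<longlongrightarrow> Fv 0) (at_left tc)" by (rule isCont_tendsto_compose[OF Fv_cont])
  hence l1: "((\<lambda>t. Fv (vc \<nu> v0 w0 t)) \<longlongrightarrow> 0) (at_left tc)" by (simp add: Fv_0)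
  have "\<forall>\<^sub>F t in at_left tc. Fv (vc \<nu> v0 w0 t) = Gt \<nu> v0 w0 t"
    using ev_left[OF tc] by eventually_elim (use H vc_prop in auto)
  from tendsto_cong[OF this] l1 have "(Gt \<nu> v0 w0 \<longlongrightarrow> 0) (at_left tc)" by simp
  from tendsto_unique[OF _ Gt_left this] show ?thesis by simp
qed

lemma typeB_G:
  assumes "typeB_at \<nu> v0 w0 tc"
  shows "Gt \<nu> v0 w0 tc = pi/2"
proof -
  have tc: "0 < tc" and H: "\<And>t. t \<in> {0..<tc} \<Longrightarrow> sol_defined \<nu> v0 w0 t \<and> 0 < vc \<nu> v0 w0 t"
    and L: "filterlim (vc \<nu> v0 w0) at_top (at_left tc)" using assms unfolding typeB_at_def by auto
  have l1: "((\<lambda>t. Fv (vc \<nu> v0 w0 t)) \<longlongrightarrow> pi/2) (at_left tc)" by (rule filterlim_compose[OF Fv_top L])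
  have "\<forall>\<^sub>F t in at_left tc. Fv (vc \<nu> v0 w0 t) = Gt \<nu> v0 w0 t"
    using ev_left[OF tc] by eventually_elim (use H vc_prop in auto)
  from tendsto_cong[OF this] l1 have "(Gt \<nu> v0 w0 \<longlongrightarrow> pi/2) (at_left tc)" by simp
  from tendsto_unique[OF _ Gt_left this] show ?thesis by simp
qed

lemma s_bounds: "0 < \<nu> \<Longrightarrow> 0 < t \<Longrightarrow> 0 < 1 - exp (- \<nu> * t) \<and> 1 - exp (- \<nu> * t) < (1::real)"
  by (auto simp: mult_pos_pos)

lemma G0_cond:
  assumes "0 < \<nu>" "0 < v0" "0 < tc" "Gt \<nu> v0 w0 tc = 0"
  shows "cc \<nu> v0 w0 < - Fv v0"
proof -
  define s where "s = 1 - exp (- \<nu> * tc)"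
  have s: "0 < s" "s < 1" using s_bounds[OF assms(1,3)] unfolding s_def by auto
  have F: "0 < Fv v0" by (rule Fv_pos[OF assms(2)])
  have e: "Fv v0 + cc \<nu> v0 w0 * s = 0" using assms(4) unfolding Gt_cc s_def .
  have "cc \<nu> v0 w0 * s < 0" using e F by linarith
  hence "cc \<nu> v0 w0 < 0" using s by (simp add: mult_less_0_iff)
  hence "cc \<nu> v0 w0 * (1 - s) < 0" using s by (simp add: mult_neg_pos)
  thus ?thesis using e by (simp add: algebra_simps)
qed

lemma Gpi_cond:
  assumes "0 < \<nu>" "0 < v0" "0 < tc" "Gt \<nu> v0 w0 tc = pi/2"
  shows "cc \<nu> v0 w0 > pi/2 - Fv v0"
proof -
  define s where "s = 1 - exp (- \<nu> * tc)"
  have s: "0 < s" "s < 1" using s_bounds[OF assms(1,3)] unfolding s_def by auto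
  have F: "Fv v0 < pi/2" by (rule Fv_lt) (use assms in simp)
  have e: "Fv v0 + cc \<nu> v0 w0 * s = pi/2" using assms(4) unfolding Gt_cc s_def .
  have "cc \<nu> v0 w0 * s > 0" using e F by linarith
  hence "cc \<nu> v0 w0 > 0" using s by (simp add: zero_less_mult_iff)
  hence "cc \<nu> v0 w0 * (1 - s) > 0" using s by simp
  thus ?thesis using e by (simp add: algebra_simps)
qed

lemma mid_ok:
  assumes "0 < \<nu>" "0 < v0" "0 < t" "- Fv v0 \<le> cc \<nu> v0 w0" "cc \<nu> v0 w0 \<le> pi/2 - Fv v0"
  shows "sol_defined \<nu> v0 w0 t \<and> 0 < vc \<nu> v0 w0 t"
proof -
  define s where "s = 1 - exp (- \<nu> * t)"
  have s: "0 < s" "s < 1" using s_bounds[OF assms(1,3)] unfolding s_def by auto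
  have F: "0 < Fv v0" "Fv v0 < pi/2" using Fv_pos[OF assms(2)] Fv_lt[of v0] assms by auto
  have g: "Gt \<nu> v0 w0 t = (1 - s) * Fv v0 + s * (Fv v0 + cc \<nu> v0 w0)" unfolding Gt_cc s_def by (simp add: algebra_simps)
  have a1: "(1 - s) * Fv v0 > 0" using s F by simp
  have a2: "s * (Fv v0 + cc \<nu> v0 w0) \<ge> 0" using s assms(4) by simp
  have a3: "(1 - s) * Fv v0 < (1 - s) * (pi/2)" using s F by simp
  have a4: "s * (Fv v0 + cc \<nu> v0 w0) \<le> s * (pi/2)" using s assms(5) by (intro mult_left_mono) auto
  have "0 < Gt \<nu> v0 w0 t" "Gt \<nu> v0 w0 t < pi/2" unfolding g using a1 a2 a3 a4 by (simp_all add: algebra_simps)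
  hence sd: "sol_defined \<nu> v0 w0 t" unfolding sol_defined_def by simp
  thus ?thesis using vc_prop(1)[OF sd] by simp
qed

lemma mkA:
  assumes "0 < \<nu>" "0 < v0" "cc \<nu> v0 w0 < - Fv v0"
  shows "typeA \<nu> v0 w0"
proof -
  define c where "c = cc \<nu> v0 w0"
  define F where "F = Fv v0"
  have F: "0 < F" "F < pi/2" using Fv_pos[OF assms(2)] Fv_lt[of v0] assms unfolding F_def by auto
  have c: "c < -F" "c < 0" using assms F unfolding c_def F_def by auto
  define s0 where "s0 = - F / c"
  have s0: "0 < s0" "s0 < 1" using c F unfolding s0_def by (auto simp: field_simps)
  define tc where "tc = - ln (1 - s0) / \<nu>"
  have "ln (1 - s0) < 0" using s0 by (intro ln_less_zero) auto
  hence tc: "0 < tc" using assms(1) unfolding tc_def by (simp add: divide_neg_pos)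
  have etc: "exp (- \<nu> * tc) = 1 - s0" using s0 assms(1) unfolding tc_def by simp
  have Gtc: "Gt \<nu> v0 w0 tc = 0" unfolding Gt_cc etc using c unfolding s0_def F_def c_def by (simp add: field_simps)
  have H: "sol_defined \<nu> v0 w0 t \<and> 0 < vc \<nu> v0 w0 t" if t: "t \<in> {0..<tc}" for t
  proof -
    have ee: "exp (- \<nu> * tc) < exp (- \<nu> * t)" using t assms(1) by simp
    have st: "1 - exp (- \<nu> * t) < s0" using ee etc by linarith
    have st2: "0 \<le> 1 - exp (- \<nu> * t)" using t assms(1) by simp
    note st = st st2
    have "c * s0 < c * (1 - exp (- \<nu> * t))" using st c by (simp add: mult_less_cancel_left_neg)
    moreover have "c * s0 = - F" using c unfolding s0_def by simp
    moreover have "c * (1 - exp (- \<nu> * t)) \<le> 0" using c st by (simp add: mult_nonpos_nonneg)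
    ultimately have "0 < Gt \<nu> v0 w0 t" "Gt \<nu> v0 w0 t < pi/2" unfolding Gt_cc using F unfolding c_def F_def by linarith+
    hence sd: "sol_defined \<nu> v0 w0 t" unfolding sol_defined_def by simp
    thus ?thesis using vc_prop(1)[OF sd] by simp
  qed
  have evH: "\<forall>\<^sub>F t in at_left tc. sol_defined \<nu> v0 w0 t \<and> 0 < vc \<nu> v0 w0 t"
    using ev_left[OF tc] by eventually_elim (use H in auto)
  have lim: "(vc \<nu> v0 w0 \<longlongrightarrow> 0) (at_left tc)"
  proof (rule order_tendstoI)
    fix a :: real assume a: "a < 0"
    show "\<forall>\<^sub>F t in at_left tc. a < vc \<nu> v0 w0 t" using evH by eventually_elim (use a in auto)
  next
    fix a :: real assume a: "0 < a"
    have "\<forall>\<^sub>F t in at_left tc. Gt \<nu> v0 w0 t < Fv a"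
      using order_tendstoD(2)[OF Gt_left[of \<nu> v0 w0 tc], of "Fv a"] Gtc Fv_pos[OF a] by simp
    thus "\<forall>\<^sub>F t in at_left tc. vc \<nu> v0 w0 t < a" using evH
      by eventually_elim (use vc_lt a in auto)
  qed
  have "filterlim (vc \<nu> v0 w0) (at_right 0) (at_left tc)"
    unfolding filterlim_at using lim evH by (auto elim: eventually_mono)
  thus ?thesis unfolding typeA_def typeA_at_def using tc H by blast
qed

lemma mkB:
  assumes "0 < \<nu>" "0 < v0" "cc \<nu> v0 w0 > pi/2 - Fv v0"
  shows "typeB \<nu> v0 w0"
proof -
  define c where "c = cc \<nu> v0 w0"
  define F where "F = Fv v0"
  have F: "0 < F" "F < pi/2" using Fv_pos[OF assms(2)] Fv_lt[of v0] assms unfolding F_def by auto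
  have c: "c > pi/2 - F" "c > 0" using assms F unfolding c_def F_def by auto
  define s0 where "s0 = (pi/2 - F) / c"
  have s0: "0 < s0" "s0 < 1" using c F unfolding s0_def by (auto simp: field_simps)
  define tc where "tc = - ln (1 - s0) / \<nu>"
  have "ln (1 - s0) < 0" using s0 by (intro ln_less_zero) auto
  hence tc: "0 < tc" using assms(1) unfolding tc_def by (simp add: divide_neg_pos)
  have etc: "exp (- \<nu> * tc) = 1 - s0" using s0 assms(1) unfolding tc_def by simp
  have Gtc: "Gt \<nu> v0 w0 tc = pi/2" unfolding Gt_cc etc using c unfolding s0_def F_def c_def by (simp add: field_simps)
  have H: "sol_defined \<nu> v0 w0 t \<and> 0 < vc \<nu> v0 w0 t" if t: "t \<in> {0..<tc}" for t
  proof -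
    have ee: "exp (- \<nu> * tc) < exp (- \<nu> * t)" using t assms(1) by simp
    have st: "1 - exp (- \<nu> * t) < s0" using ee etc by linarith
    have st2: "0 \<le> 1 - exp (- \<nu> * t)" using t assms(1) by simp
    note st = st st2
    have "c * (1 - exp (- \<nu> * t)) < c * s0" using st c by simp
    moreover have "c * s0 = pi/2 - F" using c unfolding s0_def by simp
    moreover have "c * (1 - exp (- \<nu> * t)) \<ge> 0" using c st by simp
    ultimately have "0 < Gt \<nu> v0 w0 t" "Gt \<nu> v0 w0 t < pi/2" unfolding Gt_cc using F unfolding c_def F_def by linarith+
    hence sd: "sol_defined \<nu> v0 w0 t" unfolding sol_defined_def by simp
    thus ?thesis using vc_prop(1)[OF sd] by simp
  qed
  have evH: "\<forall>\<^sub>F t in at_left tc. sol_defined \<nu> v0 w0 t \<and> 0 < vc \<nu> v0 w0 t"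
    using ev_left[OF tc] by eventually_elim (use H in auto)
  have "filterlim (vc \<nu> v0 w0) at_top (at_left tc)"
    unfolding filterlim_at_top
  proof
    fix Z :: real
    define e where "e = max Z 1"
    have e: "0 < e" "Z \<le> e" unfolding e_def by auto
    have "\<forall>\<^sub>F t in at_left tc. Fv e < Gt \<nu> v0 w0 t"
      using order_tendstoD(1)[OF Gt_left[of \<nu> v0 w0 tc], of "Fv e"] Gtc Fv_lt[of e] e by simp
    thus "\<forall>\<^sub>F t in at_left tc. Z \<le> vc \<nu> v0 w0 t" using evH
      by eventually_elim (use vc_gt e in \<open>fastforce\<close>)
  qed
  thus ?thesis unfolding typeB_def typeB_at_def using tc H by blast
qed



lemma omega_eq: "omega \<nu> v0 w0 x t = omg (w1 \<nu> v0 w0 t) (w2 \<nu> v0 w0 t) (vc \<nu> v0 w0 t) x"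
  unfolding omega_def omega_minus_def omg_def Let_def ..

lemma H0_alg:
  fixes p m V c2 :: complex
  assumes "p \<noteq> 0" "m \<noteq> 0" "V + m = 1"
  shows "-2*\<i>*((2 * \<i> * V / (m * p)) * c2) / (p * p) + 4*c2*(p - V * 0) / (p^2 * p^2) = 4 * c2 / (p^3 * m)"
proof -
  have s1: "-2*\<i>*((2 * \<i> * V / (m * p)) * c2) / (p * p) = 4 * V * c2 / (p^3 * m)"
    using assms(1,2) by (simp add: field_simps power3_eq_cube)
  have s2: "4*c2*(p - V * 0) / (p^2 * p^2) = 4 * m * c2 / (p^3 * m)"
    using assms(1,2) by (simp add: field_simps power3_eq_cube power2_eq_square)
  have "4 * V * c2 / (p^3 * m) + 4 * m * c2 / (p^3 * m) = 4 * (V + m) * c2 / (p^3 * m)"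
    by (simp add: add_divide_distrib algebra_simps)
  thus ?thesis unfolding s1 s2 assms(3) by simp
qed

lemma H0_eq:
  fixes v W :: real
  assumes "v > 0" "v \<noteq> 1"
  shows "Hh v ((2 * \<i> * complex_of_real v / (1 - (complex_of_real v)^2)) * (\<i> * complex_of_real W)) (\<i> * complex_of_real W) 0
     = 4 * (\<i> * complex_of_real W) / (complex_of_real ((1+v)^3 * (1-v)))"
proof -
  define V where "V = complex_of_real v"
  define c2 where "c2 = \<i> * complex_of_real W"
  have n1: "1 - V \<noteq> 0" using assms unfolding V_def by (simp add: complex_eq_iff)
  have n2: "1 + V \<noteq> 0" using assms unfolding V_def by (simp add: complex_eq_iff)
  have n3: "1 - V^2 = (1 - V) * (1 + V)" by (simp add: power2_eq_square algebra_simps)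
  have r: "complex_of_real ((1+v)^3 * (1-v)) = (1+V)^3 * (1-V)" unfolding V_def by simp
  have d: "Dd v 0 = 1 + V" unfolding Dd_def V_def by simp
  have e1: "complex_of_real (1+v) = 1 + V" unfolding V_def by simp
  have "Hh v ((2 * \<i> * V / ((1 - V) * (1 + V))) * c2) c2 0 = 4 * c2 / ((1+V)^3 * (1-V))"
    unfolding Hh_def d e1 V_def[symmetric]
    by (rule H0_alg) (use n1 n2 in auto)
  thus ?thesis unfolding r V_def[symmetric] c2_def[symmetric] n3 .
qed

lemma H0_norm:
  fixes v W :: real
  assumes "v > 0" "v \<noteq> 1"
  shows "norm (Hh v ((2 * \<i> * complex_of_real v / (1 - (complex_of_real v)^2)) * (\<i> * complex_of_real W)) (\<i> * complex_of_real W) 0)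
     = 4 * \<bar>W\<bar> / ((1+v)^3 * \<bar>1-v\<bar>)"
proof -
  have "norm (4 * (\<i> * complex_of_real W)) = 4 * \<bar>W\<bar>" by (simp add: norm_mult)
  moreover have "norm (complex_of_real ((1+v)^3 * (1-v))) = (1+v)^3 * \<bar>1-v\<bar>"
    unfolding norm_of_real using assms by (simp add: abs_mult)
  ultimately show ?thesis unfolding H0_eq[OF assms] norm_divide by simp
qed

definition qf :: "real \<Rightarrow> real" where "qf v = (v^2+1)^2 / (v * (1+v)^2)"

lemma qf_0: "filterlim qf at_top (at_right 0)" unfolding qf_def by real_asymp
lemma qf_top: "filterlim qf at_top at_top" unfolding qf_def by real_asymp
lemma qf_1: "qf 1 = 1" unfolding qf_def by simp

lemma val_abs:
  fixes W E v v0 m A N M p :: real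
  assumes "v > 0" "m > 0" "A > 0" "M > 0" "p > 0"
  shows "4 * (W * E * (v0/v) * (p*m/A) * (N/M)^2) / (p^3 * m) = (4*W* v0/(A*M^2)) * E * (N^2 / (v * p^2))"
  using assms by (simp add: field_simps power2_eq_square power3_eq_cube)

lemma val_formula:
  fixes v v0 w0 e :: real
  assumes "v > 0" "v \<noteq> 1" "v0 > 0" "v0 \<noteq> 1"
  shows "4 * \<bar>w0 * e * (v0/v) * ((v^2-1)/(v0^2-1)) * ((v^2+1)/(v0^2+1))^2\<bar> / ((1+v)^3*\<bar>1-v\<bar>)
    = (4*\<bar>w0\<bar>* v0/(\<bar>v0^2-1\<bar>* (v0^2+1)^2)) * \<bar>e\<bar> * qf v"
proof -
  have a: "\<bar>v^2-1\<bar> = (1+v)*\<bar>1-v\<bar>"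
  proof -
    have "v^2 - 1 = (1+v) * (v - 1)" by (simp add: power2_eq_square algebra_simps)
    hence "\<bar>v^2-1\<bar> = \<bar>1+v\<bar> * \<bar>v - 1\<bar>" by (simp add: abs_mult)
    thus ?thesis using assms by (simp add: abs_minus_commute)
  qed
  have p1: "\<bar>1-v\<bar> > 0" using assms by simp
  have p2: "\<bar>v0^2-1\<bar> > 0"
  proof -
    have "v0^2 \<noteq> 1" using assms by (simp add: power2_eq_1_iff)
    thus ?thesis by simp
  qed
  have eq1: "\<bar>w0 * e * (v0/v) * ((v^2-1)/(v0^2-1)) * ((v^2+1)/(v0^2+1))^2\<bar>
     = \<bar>w0\<bar> * \<bar>e\<bar> * (v0/v) * ((1+v)*\<bar>1-v\<bar>/\<bar>v0^2-1\<bar>) * ((v^2+1)/(v0^2+1))^2"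
    using assms unfolding a[symmetric] by (simp add: abs_mult abs_divide)
  have p3: "(v0^2+1) > 0" by (simp add: add_nonneg_pos)
  show ?thesis unfolding eq1 qf_def by (rule val_abs[OF assms(1) p1 p2 p3]) (use assms in simp)
qed



lemma blowup:
  assumes nu: "0 < \<nu>" and v0: "0 < v0" "v0 \<noteq> 1"
    and AB: "typeA_at \<nu> v0 w0 tc \<or> typeB_at \<nu> v0 w0 tc"
  shows "filterlim (\<lambda>t. L2_norm (\<lambda>x. omega \<nu> v0 w0 x t)) at_top (at_left tc) \<and>
         ((\<lambda>t. B0_norm (\<lambda>x. omega \<nu> v0 w0 x t)) \<longlongrightarrow> \<infinity>) (at_left tc)"
proof -
  have tc: "0 < tc" and H: "\<And>t. t \<in> {0..<tc} \<Longrightarrow> sol_defined \<nu> v0 w0 t \<and> 0 < vc \<nu> v0 w0 t"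
    using AB unfolding typeA_at_def typeB_at_def by auto
  have qlim: "filterlim (\<lambda>t. qf (vc \<nu> v0 w0 t)) at_top (at_left tc)"
    using AB unfolding typeA_at_def typeB_at_def
    by (auto intro: filterlim_compose[OF qf_0] filterlim_compose[OF qf_top])
  have Gtc: "Gt \<nu> v0 w0 tc = 0 \<or> Gt \<nu> v0 w0 tc = pi/2"
    using AB typeA_G0 typeB_G by blast
  have w0: "w0 \<noteq> 0"
  proof
    assume "w0 = 0"
    hence "Gt \<nu> v0 w0 tc = Fv v0" unfolding Gt_cc cc_def by simp
    thus False using Gtc Fv_pos[OF v0(1)] Fv_lt[of v0] v0 by auto
  qed
  define K where "K = 4*\<bar>w0\<bar>* v0/(\<bar>v0^2-1\<bar>*(v0^2+1)^2)"
  have v0sq: "v0^2 \<noteq> 1" using v0 by (simp add: power2_eq_1_iff)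
  have p1: "0 < \<bar>v0^2-1\<bar>" using v0sq by simp
  have "0 < v0^2+1" by (simp add: add_nonneg_pos)
  hence p2: "0 < (v0^2+1)^2" by simp
  have p3: "0 < 4*\<bar>w0\<bar>* v0" using w0 v0 by simp
  have K: "0 < K" unfolding K_def by (rule divide_pos_pos[OF p3 mult_pos_pos[OF p1 p2]])
  define val where "val t = K * exp (- \<nu> * t) * qf (vc \<nu> v0 w0 t)" for t
  have key: "\<forall>\<^sub>F t in at_left tc. (2*pi/sqrt (2*pi)) * val t \<le> L2_norm (\<lambda>x. omega \<nu> v0 w0 x t)
        \<and> ennreal (val t) \<le> B0_norm (\<lambda>x. omega \<nu> v0 w0 x t)"
    using ev_left[OF tc] filterlim_at_top_dense[THEN iffD1, OF qlim, rule_format, of 2]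
  proof eventually_elim
    case (elim t)
    define v where "v = vc \<nu> v0 w0 t"
    have sd: "sol_defined \<nu> v0 w0 t" and vp: "0 < v" using H[of t] elim unfolding v_def by auto
    have v1: "v \<noteq> 1" using elim qf_1 unfolding v_def by auto
    define W where "W = w2i \<nu> v0 w0 t"
    have c2: "w2 \<nu> v0 w0 t = \<i> * complex_of_real W" unfolding w2_def W_def ..
    have c1: "w1 \<nu> v0 w0 t = (2 * \<i> * complex_of_real v / (1 - (complex_of_real v)^2)) * (\<i> * complex_of_real W)"
      unfolding w1_def Let_def c2 v_def ..
    have Wd: "W = w0 * exp (- \<nu> * t) * (v0/v) * ((v^2-1)/(v0^2-1)) * ((v^2+1)/(v0^2+1))^2"
      unfolding W_def w2i_def Let_def v_def ..
    have nH: "norm (Hh v (w1 \<nu> v0 w0 t) (w2 \<nu> v0 w0 t) 0) = val t"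
    proof -
      have "norm (Hh v (w1 \<nu> v0 w0 t) (w2 \<nu> v0 w0 t) 0) = 4 * \<bar>W\<bar> / ((1+v)^3 * \<bar>1-v\<bar>)"
        unfolding c1 c2 by (rule H0_norm[OF vp v1])
      also have "\<dots> = val t" unfolding Wd val_formula[OF vp v1 v0] val_def K_def v_def[symmetric] by simp
      finally show ?thesis .
    qed
    have om: "(\<lambda>x. omega \<nu> v0 w0 x t) = omg (w1 \<nu> v0 w0 t) (w2 \<nu> v0 w0 t) v" unfolding omega_eq v_def ..
    note LL = L2_lower[OF psi_cont[OF vp, of "w1 \<nu> v0 w0 t" "w2 \<nu> v0 w0 t"]
       omg_psi[OF vp, of _ "w1 \<nu> v0 w0 t" "w2 \<nu> v0 w0 t"]
       psi_fourier[OF vp, of "w1 \<nu> v0 w0 t" "w2 \<nu> v0 w0 t"]]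
    have n1: "norm (-2 * pi * Hh v (w1 \<nu> v0 w0 t) (w2 \<nu> v0 w0 t) 0) = 2 * pi * val t"
      unfolding norm_mult nH by simp
    have fc: "norm (fourier_coeff (omg (w1 \<nu> v0 w0 t) (w2 \<nu> v0 w0 t) v) (-1)) = val t"
      using LL(2) nH by simp
    show ?case unfolding om using LL(1)[unfolded n1] B0_lower[of "omg (w1 \<nu> v0 w0 t) (w2 \<nu> v0 w0 t) v", unfolded fc]
      by (simp add: field_simps)
  qed
  have tend: "((\<lambda>t. K * exp (- \<nu> * t)) \<longlongrightarrow> K * exp (- \<nu> * tc)) (at_left tc)"
    by (intro tendsto_intros)
  have l1: "filterlim val at_top (at_left tc)"
    unfolding val_def by (rule filterlim_tendsto_pos_mult_at_top[OF tend _ qlim]) (use K in simp)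
  have tend2: "((\<lambda>t. (2*pi/sqrt (2*pi)) * (K * exp (- \<nu> * t))) \<longlongrightarrow> (2*pi/sqrt (2*pi)) * (K * exp (- \<nu> * tc))) (at_left tc)"
    by (intro tendsto_intros)
  have l2: "filterlim (\<lambda>t. (2*pi/sqrt (2*pi)) * val t) at_top (at_left tc)"
    unfolding val_def mult.assoc[symmetric]
    by (rule filterlim_tendsto_pos_mult_at_top[OF tend2[unfolded mult.assoc[symmetric]] _ qlim]) (use K in simp)
  have "filterlim (\<lambda>t. L2_norm (\<lambda>x. omega \<nu> v0 w0 x t)) at_top (at_left tc)"
    by (rule filterlim_at_top_mono[OF l2]) (use key in \<open>auto elim: eventually_mono\<close>)
  moreover have "((\<lambda>t. B0_norm (\<lambda>x. omega \<nu> v0 w0 x t)) \<longlongrightarrow> \<infinity>) (at_left tc)"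
  proof (rule order_tendstoI)
    fix a :: ennreal assume a: "a < \<infinity>"
    have "((\<lambda>t. ennreal (val t)) \<longlongrightarrow> top) (at_left tc)"
      using l1 by (simp add: ennreal_tendsto_top_eq_at_top)
    from order_tendstoD(1)[OF this, of a] a
    have "\<forall>\<^sub>F t in at_left tc. a < ennreal (val t)" by simp
    thus "\<forall>\<^sub>F t in at_left tc. a < B0_norm (\<lambda>x. omega \<nu> v0 w0 x t)" using key
      by eventually_elim (auto intro: less_le_trans)
  qed simp
  ultimately show ?thesis ..
qed



lemma typeA_iff:
  assumes "0 < \<nu>" "0 < v0"
  shows "typeA \<nu> v0 w0 \<longleftrightarrow> cc \<nu> v0 w0 < - Fv v0"
proof
  assume "typeA \<nu> v0 w0"
  then obtain tc where t: "typeA_at \<nu> v0 w0 tc" unfolding typeA_def by blast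
  hence "0 < tc" unfolding typeA_at_def by simp
  thus "cc \<nu> v0 w0 < - Fv v0" using G0_cond[OF assms _ typeA_G0[OF t]] by simp
qed (rule mkA[OF assms])

lemma typeB_iff:
  assumes "0 < \<nu>" "0 < v0"
  shows "typeB \<nu> v0 w0 \<longleftrightarrow> cc \<nu> v0 w0 > pi/2 - Fv v0"
proof
  assume "typeB \<nu> v0 w0"
  then obtain tc where t: "typeB_at \<nu> v0 w0 tc" unfolding typeB_def by blast
  hence "0 < tc" unfolding typeB_at_def by simp
  thus "cc \<nu> v0 w0 > pi/2 - Fv v0" using Gpi_cond[OF assms _ typeB_G[OF t]] by simp
qed (rule mkB[OF assms])

definition Dn :: "real \<Rightarrow> real \<Rightarrow> real" where
  "Dn \<nu> v0 = \<nu> * (v0^2 - 1) * (v0^2 + 1)^2 / (2 * v0)"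

lemma cc_Dn: "0 < v0 \<Longrightarrow> cc \<nu> v0 w0 = w0 / Dn \<nu> v0"
  unfolding cc_def Dn_def by (simp add: field_simps)

lemma pos_sq1: "0 < (x::real)^2 + 1" by (simp add: add_nonneg_pos)

lemma f0_abs:
  fixes \<nu> v0 M N a :: real
  assumes "v0 \<noteq> 0" "N \<noteq> 0"
  shows "- \<nu> / 2 * (M^2 + N^2 / v0 * M * a) = - (v0 * M / N^2 + a) * (\<nu> * M * N^2 / (2 * v0))"
  using assms by (simp add: field_simps power2_eq_square)

lemma f0_Dn: "0 < v0 \<Longrightarrow> - \<nu> / 2 * f0 v0 = - Fv v0 * Dn \<nu> v0"
  unfolding f0_def Fv_def Dn_def
  by (rule f0_abs) (use pos_sq1[of v0] in auto)

lemma finf_abs: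
  fixes \<nu> v0 M N a :: real
  assumes "v0 \<noteq> 0" "N \<noteq> 0"
  shows "- \<nu> / 2 * (M^2 + N^2 / v0 * M * (a - pi/2)) = (pi/2 - (v0 * M / N^2 + a)) * (\<nu> * M * N^2 / (2 * v0))"
  using assms by (simp add: field_simps power2_eq_square)

lemma finf_Dn: "0 < v0 \<Longrightarrow> - \<nu> / 2 * finf v0 = (pi/2 - Fv v0) * Dn \<nu> v0"
  unfolding finf_def Fv_def Dn_def
  by (rule finf_abs) (use pos_sq1[of v0] in auto)

lemma Dn_pos: "0 < \<nu> \<Longrightarrow> 1 < v0 \<Longrightarrow> 0 < Dn \<nu> v0"
proof -
  assume a: "0 < \<nu>" "1 < v0"
  have "1 < v0^2" using a by (simp add: one_less_power)
  hence q1: "0 < \<nu> * (v0^2 - 1)" using a by simp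
  have "0 < v0^2+1" by (simp add: add_nonneg_pos)
  hence q2: "0 < (v0^2+1)^2" by simp
  have q3: "0 < 2 * v0" using a by simp
  show ?thesis unfolding Dn_def by (rule divide_pos_pos[OF mult_pos_pos[OF q1 q2] q3])
qed

lemma Dn_neg: "0 < \<nu> \<Longrightarrow> 0 < v0 \<Longrightarrow> v0 < 1 \<Longrightarrow> Dn \<nu> v0 < 0"
proof -
  assume a: "0 < \<nu>" "0 < v0" "v0 < 1"
  have "v0 * v0 < 1 * 1" using a by (intro mult_strict_mono) auto
  hence "v0^2 < 1" by (simp add: power2_eq_square)
  hence "\<nu> * (v0^2 - 1) < 0" using a by (simp add: mult_pos_neg)
  moreover have "0 < v0^2+1" by (simp add: add_nonneg_pos)
  hence "0 < (v0^2+1)^2" by simp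
  ultimately have "\<nu> * (v0^2 - 1) * (v0^2 + 1)^2 < 0" by (simp add: mult_neg_pos)
  thus ?thesis unfolding Dn_def using a by (simp add: divide_neg_pos)
qed



theorem theorem3p7:
  fixes \<nu> v0 w0 :: real
  assumes "0 < \<nu>" and "0 < v0" and "v0 \<noteq> 1"
  shows "(typeA \<nu> v0 w0 \<longleftrightarrow>
            (0 < v0 \<and> v0 < 1 \<and> w0 > - \<nu> / 2 * f0 v0) \<or> (v0 > 1 \<and> w0 < - \<nu> / 2 * f0 v0))
       \<and> (typeB \<nu> v0 w0 \<longleftrightarrow>
            (0 < v0 \<and> v0 < 1 \<and> w0 < - \<nu> / 2 * finf v0) \<or> (v0 > 1 \<and> w0 > - \<nu> / 2 * finf v0))
       \<and> (\<forall>tc. typeA_at \<nu> v0 w0 tc \<or> typeB_at \<nu> v0 w0 tc \<longrightarrow>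
            filterlim (\<lambda>t. L2_norm (\<lambda>x. omega \<nu> v0 w0 x t)) at_top (at_left tc) \<and>
            ((\<lambda>t. B0_norm (\<lambda>x. omega \<nu> v0 w0 x t)) \<longlongrightarrow> \<infinity>) (at_left tc))
       \<and> (((0 < v0 \<and> v0 < 1 \<and> - \<nu> / 2 * finf v0 \<le> w0 \<and> w0 \<le> - \<nu> / 2 * f0 v0) \<or>
            (v0 > 1 \<and> - \<nu> / 2 * f0 v0 \<le> w0 \<and> w0 \<le> - \<nu> / 2 * finf v0)) \<longrightarrow>
            \<not> typeA \<nu> v0 w0 \<and> \<not> typeB \<nu> v0 w0 \<and>
            (\<forall>t > 0. sol_defined \<nu> v0 w0 t \<and> 0 < vc \<nu> v0 w0 t))"
proof -
  note nu = assms(1) and v0 = assms(2) and v1 = assms(3)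
  define F where "F = Fv v0"
  define D where "D = Dn \<nu> v0"
  have ccD: "cc \<nu> v0 w0 = w0 / D" unfolding D_def by (rule cc_Dn[OF v0])
  have f0e: "- \<nu> / 2 * f0 v0 = - F * D" unfolding D_def F_def by (rule f0_Dn[OF v0])
  have finfe: "- \<nu> / 2 * finf v0 = (pi/2 - F) * D" unfolding D_def F_def by (rule finf_Dn[OF v0])
  have cases: "(v0 < 1 \<and> D < 0) \<or> (1 < v0 \<and> 0 < D)"
    using v1 Dn_pos[OF nu] Dn_neg[OF nu v0] unfolding D_def by (cases "v0 < 1") auto
  have A: "typeA \<nu> v0 w0 \<longleftrightarrow>
            (0 < v0 \<and> v0 < 1 \<and> w0 > - \<nu> / 2 * f0 v0) \<or> (v0 > 1 \<and> w0 < - \<nu> / 2 * f0 v0)"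
    unfolding typeA_iff[OF nu v0] ccD f0e F_def[symmetric]
    using cases v0 by (auto simp: neg_divide_less_eq pos_divide_less_eq)
  have B: "typeB \<nu> v0 w0 \<longleftrightarrow>
            (0 < v0 \<and> v0 < 1 \<and> w0 < - \<nu> / 2 * finf v0) \<or> (v0 > 1 \<and> w0 > - \<nu> / 2 * finf v0)"
    unfolding typeB_iff[OF nu v0] ccD finfe F_def[symmetric]
    using cases v0 by (auto simp: neg_less_divide_eq pos_less_divide_eq)
  have C: "\<forall>tc. typeA_at \<nu> v0 w0 tc \<or> typeB_at \<nu> v0 w0 tc \<longrightarrow>
            filterlim (\<lambda>t. L2_norm (\<lambda>x. omega \<nu> v0 w0 x t)) at_top (at_left tc) \<and>
            ((\<lambda>t. B0_norm (\<lambda>x. omega \<nu> v0 w0 x t)) \<longlongrightarrow> \<infinity>) (at_left tc)"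
    using blowup[OF nu v0 v1] by blast
  have Dp: "((0 < v0 \<and> v0 < 1 \<and> - \<nu> / 2 * finf v0 \<le> w0 \<and> w0 \<le> - \<nu> / 2 * f0 v0) \<or>
            (v0 > 1 \<and> - \<nu> / 2 * f0 v0 \<le> w0 \<and> w0 \<le> - \<nu> / 2 * finf v0)) \<longrightarrow>
            \<not> typeA \<nu> v0 w0 \<and> \<not> typeB \<nu> v0 w0 \<and>
            (\<forall>t > 0. sol_defined \<nu> v0 w0 t \<and> 0 < vc \<nu> v0 w0 t)"
  proof
    assume cond: "(0 < v0 \<and> v0 < 1 \<and> - \<nu> / 2 * finf v0 \<le> w0 \<and> w0 \<le> - \<nu> / 2 * f0 v0) \<or>
            (v0 > 1 \<and> - \<nu> / 2 * f0 v0 \<le> w0 \<and> w0 \<le> - \<nu> / 2 * finf v0)"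
    have b: "- F \<le> cc \<nu> v0 w0 \<and> cc \<nu> v0 w0 \<le> pi/2 - F"
      using cond cases unfolding ccD f0e finfe
      by (auto simp: neg_le_divide_eq neg_divide_le_eq pos_le_divide_eq pos_divide_le_eq)
    show "\<not> typeA \<nu> v0 w0 \<and> \<not> typeB \<nu> v0 w0 \<and> (\<forall>t > 0. sol_defined \<nu> v0 w0 t \<and> 0 < vc \<nu> v0 w0 t)"
      using b typeA_iff[OF nu v0] typeB_iff[OF nu v0] mid_ok[OF nu v0] unfolding F_def by auto
  qed
  show ?thesis using A B C Dp by blast
qed


end
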